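(* Let $H=(\mathcal{V},\mathcal{I})$ be an interval hypergraph and let $\mathcal{P}=\{S_1,\dots,S_k\}$ be a partition of $\mathcal{I}$ such that each $S_i$ has an exact hitting set $h_i$. Let $R=\bigcup_{i=1}^k h_i$ and define $t:\mathcal{I}\to\mathcal{V}$ by letting $t(I)$ be the unique element of $I\cap h_i$, where $S_i$ is the part containing $I$. Then the clique number of the co-occurrence graph $G_{R,t}$ is at most $k$.
   Context: An interval hypergraph has vertex set $[n]=\{1,\dots,n\}$ and hyperedges that are nonempty sets of consecutive integers. An exact hitting set of a family $S$ of hyperedges is a set $h\subseteq\mathcal{V}$ with $|h\cap I|=1$ for every $I\in S$. For a representative function $t$ (with $t(I)\in I$) and its image $R$, the co-occurrence graph $G_{R,t}$ has vertex set $R$, with distinct $u,v$ adjacent iff some $I\in\mathcal{I}$ has $u,v\in I$ and $t(I)\in\{u,v\}$. *)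

theory Defs
  imports Main "HOL-Library.Disjoint_Sets"
begin

definition interval_hypergraph :: "nat \<Rightarrow> nat set set \<Rightarrow> bool" where
  "interval_hypergraph n \<I> \<longleftrightarrow>
     (\<forall>J\<in>\<I>. J \<noteq> {} \<and> J \<subseteq> {1..n} \<and> (\<exists>a b. J = {a..b}))"

definition exact_hitting_set :: "nat set \<Rightarrow> nat set set \<Rightarrow> nat set \<Rightarrow> bool" where
  "exact_hitting_set V S h \<longleftrightarrow> h \<subseteq> V \<and> (\<forall>J\<in>S. card (h \<inter> J) = 1)"

definition cooc_adj :: "nat set set \<Rightarrow> nat set \<Rightarrow> (nat set \<Rightarrow> nat) \<Rightarrow> nat \<Rightarrow> nat \<Rightarrow> bool" where
  "cooc_adj \<I> R t u v \<longleftrightarrow> u \<in> R \<and> v \<in> R \<and> u \<noteq> v \<and>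
     (\<exists>J\<in>\<I>. u \<in> J \<and> v \<in> J \<and> t J \<in> {u, v})"

definition cooc_clique :: "nat set set \<Rightarrow> nat set \<Rightarrow> (nat set \<Rightarrow> nat) \<Rightarrow> nat set \<Rightarrow> bool" where
  "cooc_clique \<I> R t C \<longleftrightarrow> C \<subseteq> R \<and>
     (\<forall>u\<in>C. \<forall>v\<in>C. u \<noteq> v \<longrightarrow> cooc_adj \<I> R t u v)"

definition cooc_clique_number :: "nat set set \<Rightarrow> nat set \<Rightarrow> (nat set \<Rightarrow> nat) \<Rightarrow> nat" where
  "cooc_clique_number \<I> R t = Max {card C | C. cooc_clique \<I> R t C}"

end

theory Submission
  imports Defs
begin

lemma key:
  fixes P :: "'a set" and h :: "'a \<Rightarrow> nat set"
  assumes fP: "finite P"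
  shows "\<And>C. card C = m \<Longrightarrow> finite C \<Longrightarrow> C \<noteq> {} \<Longrightarrow>
    (\<forall>u\<in>C. \<forall>v\<in>C. u < v \<longrightarrow> (\<exists>p\<in>P. h p \<inter> {u..v} = {u} \<or> h p \<inter> {u..v} = {v})) \<Longrightarrow>
    (\<forall>c\<in>C. \<exists>p\<in>P. c \<in> h p) \<Longrightarrow>
    card C \<le> card {p\<in>P. h p \<inter> {Min C..Max C} \<noteq> {}}"
proof (induction m rule: less_induct)
  case (less m C)
  let ?Q = "\<lambda>C. {p\<in>P. h p \<inter> {Min C..Max C} \<noteq> {}}"
  have fQ: "finite (?Q D)" for D using fP by auto
  show ?case
  proof (cases "card C = 1")
    case True
    then obtain c where C: "C = {c}" by (auto simp: card_Suc_eq)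
    then obtain p where "p \<in> P" "c \<in> h p" using less.prems by auto
    hence "p \<in> ?Q C" using C by auto
    hence "card (?Q C) \<ge> 1" using fQ[of C]
      by (metis One_nat_def Suc_leI card_gt_0_iff empty_iff)
    then show ?thesis using True by simp
  next
    case False
    hence c2: "card C \<ge> 2" using less.prems
      by (metis One_nat_def Suc_1 Suc_leI card_gt_0_iff le_neq_implies_less not_less_eq_eq)
    have mnC: "Min C \<in> C" "Max C \<in> C" using less.prems by auto
    have mlt: "Min C < Max C"
    proof (rule ccontr)
      assume "\<not> Min C < Max C"
      hence "\<forall>x\<in>C. x = Min C" using less.prems
        by (metis Max_ge Min_le antisym not_less order.trans)
      hence "C \<subseteq> {Min C}" by auto
      hence "card C \<le> 1" by (metis card.empty card.insert card_mono empty_iff finite.intros(1,2) One_nat_def)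
      thus False using c2 by simp
    qed
    obtain p where p: "p \<in> P" "h p \<inter> {Min C..Max C} = {Min C} \<or> h p \<inter> {Min C..Max C} = {Max C}"
      using less.prems(4) mnC mlt by meson
    have pQ: "p \<in> ?Q C" using p mlt by auto
    from p(2) show ?thesis
    proof
      assume hp: "h p \<inter> {Min C..Max C} = {Min C}"
      define D where "D = C - {Min C}"
      have fD: "finite D" using less.prems unfolding D_def by auto
      have Dne: "D \<noteq> {}" using mnC mlt unfolding D_def by (metis Diff_iff empty_iff less_irrefl singletonD)
      have cC: "card C = Suc (card D)" using less.prems mnC unfolding D_def
        by (simp add: card_Diff_singleton) (metis Suc_pred card_gt_0_iff empty_iff)
      have cD: "card D < m" "card C = Suc (card D)" using cC less.prems by auto
      have "Max C \<in> D" using mnC mlt unfolding D_def by auto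
      have b1: "Min C < Min D"
        using fD Dne less.prems unfolding D_def
        by (metis Diff_iff Min_in Min_le insertCI le_neq_implies_less)
      have b2: "Max D \<le> Max C"
        using fD Dne less.prems unfolding D_def by (simp add: Max_mono)
      have IH: "card D \<le> card (?Q D)"
        apply (rule less.IH[OF cD(1) refl fD Dne])
        using less.prems(4,5) unfolding D_def by auto
      have sub: "?Q D \<subseteq> ?Q C - {p}"
      proof
        fix q assume q: "q \<in> ?Q D"
        have "q \<in> ?Q C" using q b1 b2 by auto
        moreover have "q \<noteq> p"
        proof
          assume "q = p"
          then obtain x where "x \<in> h p" "Min D \<le> x" "x \<le> Max D" using q by auto
          hence "x \<in> h p \<inter> {Min C..Max C}" using b1 b2 by auto
          hence "x = Min C" using hp by auto
          thus False using b1 \<open>Min D \<le> x\<close> by simp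
        qed
        ultimately show "q \<in> ?Q C - {p}" by auto
      qed
      have "card (?Q D) \<le> card (?Q C - {p})" using sub fQ by (intro card_mono) auto
      also have "\<dots> = card (?Q C) - 1" using pQ fQ by (simp add: card_Diff_singleton)
      finally have "card (?Q D) \<le> card (?Q C) - 1" .
      moreover have "card (?Q C) > 0" using pQ fQ[of C] card_gt_0_iff by blast
      ultimately show ?thesis using IH cD(2) by linarith
    next
      assume hp: "h p \<inter> {Min C..Max C} = {Max C}"
      define D where "D = C - {Max C}"
      have fD: "finite D" using less.prems unfolding D_def by auto
      have Dne: "D \<noteq> {}" using mnC mlt unfolding D_def by (metis Diff_iff empty_iff less_irrefl singletonD)
      have cC: "card C = Suc (card D)" using less.prems mnC unfolding D_def
        by (simp add: card_Diff_singleton) (metis Suc_pred card_gt_0_iff empty_iff)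
      have cD: "card D < m" "card C = Suc (card D)" using cC less.prems by auto
      have b1: "Max D < Max C"
        using fD Dne less.prems unfolding D_def
        by (metis Diff_iff Max_in Max_ge insertCI le_neq_implies_less)
      have b2: "Min C \<le> Min D"
        using fD Dne less.prems unfolding D_def by (simp add: Min_antimono)
      have IH: "card D \<le> card (?Q D)"
        apply (rule less.IH[OF cD(1) refl fD Dne])
        using less.prems(4,5) unfolding D_def by auto
      have sub: "?Q D \<subseteq> ?Q C - {p}"
      proof
        fix q assume q: "q \<in> ?Q D"
        have "q \<in> ?Q C" using q b1 b2 by auto
        moreover have "q \<noteq> p"
        proof
          assume "q = p"
          then obtain x where "x \<in> h p" "Min D \<le> x" "x \<le> Max D" using q by auto
          hence "x \<in> h p \<inter> {Min C..Max C}" using b1 b2 by auto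
          hence "x = Max C" using hp by auto
          thus False using b1 \<open>x \<le> Max D\<close> by simp
        qed
        ultimately show "q \<in> ?Q C - {p}" by auto
      qed
      have "card (?Q D) \<le> card (?Q C - {p})" using sub fQ by (intro card_mono) auto
      also have "\<dots> = card (?Q C) - 1" using pQ fQ by (simp add: card_Diff_singleton)
      finally have "card (?Q D) \<le> card (?Q C) - 1" .
      moreover have "card (?Q C) > 0" using pQ fQ[of C] card_gt_0_iff by blast
      ultimately show ?thesis using IH cD(2) by linarith
    qed
  qed
qed

theorem lemma8:
  fixes n :: nat and \<I> :: "nat set set" and P :: "nat set set set"
    and h :: "nat set set \<Rightarrow> nat set" and t :: "nat set \<Rightarrow> nat"
  assumes H: "interval_hypergraph n \<I>"
    and part: "partition_on \<I> P"
    and hit: "\<forall>S\<in>P. exact_hitting_set {1..n} S (h S)"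
    and t_def: "\<forall>S\<in>P. \<forall>J\<in>S. t J = (THE v. v \<in> J \<inter> h S)"
  shows "cooc_clique_number \<I> (\<Union>S\<in>P. h S) t \<le> card P"
proof -
  let ?R = "\<Union>S\<in>P. h S"
  have "\<I> \<subseteq> Pow {1..n}" using H unfolding interval_hypergraph_def by auto
  hence fI: "finite \<I>" by (rule finite_subset) simp
  have "P \<subseteq> Pow \<I>" using part unfolding partition_on_def by auto
  hence fP: "finite P" using fI by (meson finite_Pow_iff finite_subset)
  have "?R \<subseteq> {1..n}" using hit unfolding exact_hitting_set_def by auto
  hence fR: "finite ?R" by (rule finite_subset) simp
  have adj: "\<exists>p\<in>P. h p \<inter> {u..v} = {u} \<or> h p \<inter> {u..v} = {v}"
    if a: "cooc_adj \<I> ?R t u v" and uv: "u < v" for u v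
  proof -
    obtain J where J: "J \<in> \<I>" "u \<in> J" "v \<in> J" "t J \<in> {u, v}"
      using a unfolding cooc_adj_def by auto
    obtain S where S: "S \<in> P" "J \<in> S" using part J(1) unfolding partition_on_def by auto
    obtain a b where ab: "J = {a..b}" using H J(1) unfolding interval_hypergraph_def by auto
    have uvJ: "{u..v} \<subseteq> J" using ab J by auto
    have "card (h S \<inter> J) = 1" using hit S unfolding exact_hitting_set_def by auto
    then obtain w where w: "h S \<inter> J = {w}" by (auto simp: card_Suc_eq)
    have "t J = w" using t_def S w by auto
    hence "h S \<inter> {u..v} = {w}" "w \<in> {u,v}" using w uvJ J(4) uv by auto
    thus ?thesis using S by auto
  qed
  have bound: "card C \<le> card P" if C: "cooc_clique \<I> ?R t C" for C
  proof (cases "C = {}")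
    case True thus ?thesis by simp
  next
    case False
    have CR: "C \<subseteq> ?R" using C unfolding cooc_clique_def by auto
    have fC: "finite C" using CR fR finite_subset by blast
    have "card C \<le> card {p\<in>P. h p \<inter> {Min C..Max C} \<noteq> {}}"
      apply (rule key[OF fP refl fC False])
      subgoal
      proof (intro ballI impI)
        fix u v assume "u \<in> C" "v \<in> C" "u < v"
        hence "cooc_adj \<I> ?R t u v" using C unfolding cooc_clique_def by auto
        thus "\<exists>p\<in>P. h p \<inter> {u..v} = {u} \<or> h p \<inter> {u..v} = {v}" using adj \<open>u < v\<close> by blast
      qed
      subgoal using CR by blast
      done
    also have "\<dots> \<le> card P" using fP by (intro card_mono) auto
    finally show ?thesis .
  qed
  have fin: "finite {card C | C. cooc_clique \<I> ?R t C}"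
  proof -
    have "{card C | C. cooc_clique \<I> ?R t C} \<subseteq> card ` Pow ?R"
      unfolding cooc_clique_def by auto
    thus ?thesis using fR finite_subset by blast
  qed
  have ne: "{card C | C. cooc_clique \<I> ?R t C} \<noteq> {}"
    unfolding cooc_clique_def by auto
  show ?thesis unfolding cooc_clique_number_def
    using fin ne bound by (subst Max_le_iff) auto
qed

end
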